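(* Let $r\in\mathbb{N}$ and $\lambda\in(-1,1)$. Then there exists $f\in C^r[-1,1]$ with $f\equiv0$ on $[-1,\lambda]$ such that there is no $g\in C^{r+1}[-1,1]$ satisfying $g^{(i)}(\lambda)=f^{(i)}(\lambda)$ for $0\le i\le\hat r$, together with $g\le f$ on $(\lambda-\varepsilon,\lambda]$ and $g\ge f$ on $[\lambda,\lambda+\varepsilon)$ for some $\varepsilon>0$, where $\hat r:=2\lceil r/2\rceil-1$ (i.e. $\hat r=r$ if $r$ is odd and $\hat r=r-1$ if $r$ is even). *)

theory Defs
  imports "HOL-Analysis.Analysis"
begin

definition deriv_family :: "nat \<Rightarrow> real set \<Rightarrow> (real \<Rightarrow> real) \<Rightarrow> (nat \<Rightarrow> real \<Rightarrow> real) \<Rightarrow> bool" where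
  "deriv_family k S f D \<longleftrightarrow>
     (\<forall>x\<in>S. D 0 x = f x) \<and>
     (\<forall>i<k. \<forall>x\<in>S. (D i has_real_derivative D (Suc i) x) (at x within S)) \<and>
     (\<forall>i\<le>k. continuous_on S (D i))"

definition Ck_on :: "nat \<Rightarrow> real set \<Rightarrow> (real \<Rightarrow> real) \<Rightarrow> bool" where
  "Ck_on k S f \<longleftrightarrow> (\<exists>D. deriv_family k S f D)"

definition rhat :: "nat \<Rightarrow> int" where
  "rhat r = 2 * \<lceil>real r / 2\<rceil> - 1"

end

theory Submission imports Defs begin

definition pw :: "real \<Rightarrow> real \<Rightarrow> real \<Rightarrow> real" where
  "pw l a x = max 0 (x - l) powr a"

lemma pw_cont: "a > 0 \<Longrightarrow> continuous_on UNIV (pw l a)"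
  unfolding pw_def
proof (rule continuous_on_powr')
  show "continuous_on UNIV (\<lambda>x. max 0 (x - l))"
    by (intro continuous_on_max continuous_on_const continuous_on_diff continuous_on_id)
qed auto

lemma pw_left: "x \<le> l \<Longrightarrow> pw l a x = 0"
  unfolding pw_def by simp

lemma pw_right: "x > l \<Longrightarrow> pw l a x = (x - l) powr a"
  unfolding pw_def by simp

lemma pw_deriv:
  assumes "a > 1"
  shows "(pw l a has_real_derivative a * pw l (a-1) x) (at x)"
proof (cases "x > l")
  case True
  have d1: "((\<lambda>y. y - l) has_real_derivative 1) (at x)"
    by (rule derivative_eq_intros refl | simp)+
  have "((\<lambda>y. (y - l) powr a) has_real_derivative a * (x - l) powr (a - of_nat 1) * 1) (at x)"
    by (rule DERIV_fun_powr[OF d1]) (simp add: True)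
  hence d2: "((\<lambda>y. (y - l) powr a) has_real_derivative a * pw l (a-1) x) (at x)"
    by (simp add: pw_right True)
  show ?thesis
  proof (rule has_field_derivative_transform_within_open[OF d2, of "{l<..}"])
    show "open {l<..}" by simp
    show "x \<in> {l<..}" using True by simp
    fix y :: real assume "y \<in> {l<..}"
    thus "(y - l) powr a = pw l a y" by (simp add: pw_right)
  qed
next
  case False
  show ?thesis
  proof (cases "x < l")
    case True
    have d2: "((\<lambda>y. 0) has_real_derivative a * pw l (a-1) x) (at x)"
      using True by (simp add: pw_left)
    show ?thesis
    proof (rule has_field_derivative_transform_within_open[OF d2, of "{..<l}"])
      show "open {..<l}" by simp
      show "x \<in> {..<l}" using True by simp
      fix y :: real assume "y \<in> {..<l}"
      thus "0 = pw l a y" by (simp add: pw_left)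
    qed
  next
    case False
    with \<open>\<not> x > l\<close> have x: "x = l" by simp
    have c: "continuous_on UNIV (pw l (a-1))" using assms by (intro pw_cont) simp
    hence "(pw l (a-1) \<longlongrightarrow> pw l (a-1) l) (at l)"
      by (simp add: continuous_on_def)
    hence t: "(pw l (a-1) \<longlongrightarrow> 0) (at l)" by (simp add: pw_left)
    have q: "pw l (a-1) y = (pw l a y - pw l a l) / (y - l)" if "y \<noteq> l" for y
    proof (cases "y > l")
      case True
      then show ?thesis by (simp add: pw_right pw_left powr_diff)
    next
      case False
      then show ?thesis by (simp add: pw_left)
    qed
    have "\<forall>\<^sub>F y in at l. pw l (a-1) y = (pw l a y - pw l a l) / (y - l)"
      unfolding eventually_at_filter by (simp add: q)
    hence "((\<lambda>y. (pw l a y - pw l a l) / (y - l)) \<longlongrightarrow> 0) (at l)"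
      by (rule Lim_transform_eventually[OF t])
    hence "((\<lambda>y. (pw l a y - pw l a l) / (y - l)) \<longlongrightarrow> a * pw l (a - 1) l) (at l)"
      by (simp add: pw_left)
    then show ?thesis using x by (simp only: has_field_derivative_iff)
  qed
qed

lemma rhat_lt: "i < r \<Longrightarrow> int i \<le> rhat r"
proof -
  assume "i < r"
  have "real r / 2 \<le> real_of_int \<lceil>real r / 2\<rceil>" by (rule le_of_int_ceiling)
  hence "real r \<le> 2 * real_of_int \<lceil>real r / 2\<rceil>" by linarith
  hence "int r \<le> 2 * \<lceil>real r / 2\<rceil>" by linarith
  thus ?thesis using \<open>i < r\<close> unfolding rhat_def by linarith
qed

lemma rhat_odd: "odd r \<Longrightarrow> int r \<le> rhat r"
proof -
  assume "odd r"
  then obtain k where k: "r = 2 * k + 1" by (metis oddE)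
  have "\<lceil>real r / 2\<rceil> = int k + 1"
    by (rule ceiling_unique) (auto simp: k)
  thus ?thesis unfolding rhat_def using k by simp
qed

lemma Df_deriv:
  fixes r :: nat and lam :: real
  defines "c \<equiv> \<lambda>i. \<Prod>j<i. real r + 1/2 - real j"
  assumes "i < r"
  shows "((\<lambda>x. c i * pw lam (real r + 1/2 - real i) x) has_real_derivative
           c (Suc i) * pw lam (real r + 1/2 - real (Suc i)) x) (at x)"
proof -
  have a: "real r + 1/2 - real i > 1" using assms(2) by simp
  have "((\<lambda>x. c i * pw lam (real r + 1/2 - real i) x) has_real_derivative
           c i * ((real r + 1/2 - real i) * pw lam (real r + 1/2 - real i - 1) x)) (at x)"
    by (intro DERIV_cmult pw_deriv a)
  moreover have e: "c i * ((real r + 1/2 - real i) * pw lam (real r + 1/2 - real i - 1) x)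
     = c (Suc i) * pw lam (real r + 1/2 - real (Suc i)) x"
    by (simp add: c_def algebra_simps)
  ultimately show ?thesis by (simp only: e)
qed

theorem lemma3p2:
  fixes r :: nat and lam :: real
  assumes "-1 < lam" and "lam < 1"
  shows "\<exists>f Df. deriv_family r {-1..1} f Df \<and> (\<forall>x\<in>{-1..lam}. f x = 0) \<and>
     \<not> (\<exists>g Dg. deriv_family (Suc r) {-1..1} g Dg \<and>
           (\<forall>i::nat. int i \<le> rhat r \<longrightarrow> Dg i lam = Df i lam) \<and>
           (\<exists>eps>0. (\<forall>x\<in>{-1..1}. lam - eps < x \<and> x \<le> lam \<longrightarrow> g x \<le> f x) \<and>
                   (\<forall>x\<in>{-1..1}. lam \<le> x \<and> x < lam + eps \<longrightarrow> g x \<ge> f x)))"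
proof -
  define c where "c \<equiv> \<lambda>i. \<Prod>j<i. real r + 1/2 - real j"
  define Df where "Df \<equiv> \<lambda>i x. c i * pw lam (real r + 1/2 - real i) x"
  define f where "f \<equiv> pw lam (real r + 1/2)"
  define S where "S \<equiv> {-1..1::real}"
  have fam: "deriv_family r S f Df"
    unfolding deriv_family_def
  proof (intro conjI ballI allI impI)
    fix x show "Df 0 x = f x" by (simp add: Df_def f_def c_def)
  next
    fix i x assume "i < r" "x \<in> S"
    show "(Df i has_real_derivative Df (Suc i) x) (at x within S)"
      unfolding Df_def c_def
      by (rule has_field_derivative_at_within, rule Df_deriv[OF \<open>i < r\<close>])
  next
    fix i assume "i \<le> r"
    hence "real r + 1/2 - real i > 0" by simp
    hence "continuous_on UNIV (pw lam (real r + 1/2 - real i))" by (rule pw_cont)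
    hence "continuous_on S (pw lam (real r + 1/2 - real i))"
      by (rule continuous_on_subset) simp
    thus "continuous_on S (Df i)" unfolding Df_def
      by (intro continuous_intros)
  qed
  have f0: "\<forall>x\<in>{-1..lam}. f x = 0" by (auto simp: f_def pw_left)
  have Df0: "\<And>i. Df i lam = 0" by (simp add: Df_def pw_left)
  have no: False if fam2: "deriv_family (Suc r) S g Dg"
      and hz0: "\<forall>i::nat. int i \<le> rhat r \<longrightarrow> Dg i lam = Df i lam"
      and eps: "eps > 0"
      and L: "\<forall>x\<in>S. lam - eps < x \<and> x \<le> lam \<longrightarrow> g x \<le> f x"
      and R: "\<forall>x\<in>S. lam \<le> x \<and> x < lam + eps \<longrightarrow> g x \<ge> f x"
    for g Dg eps
  proof -
    have hz: "\<And>i. int i \<le> rhat r \<Longrightarrow> Dg i lam = 0" using hz0 Df0 by simp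
    have g0: "\<And>x. x \<in> S \<Longrightarrow> Dg 0 x = g x"
      and gd: "\<And>i x. i < Suc r \<Longrightarrow> x \<in> S \<Longrightarrow> (Dg i has_real_derivative Dg (Suc i) x) (at x within S)"
      and gc: "\<And>i. i \<le> Suc r \<Longrightarrow> continuous_on S (Dg i)"
      using fam2 unfolding deriv_family_def by auto
    have "compact (Dg (Suc r) ` S)"
      unfolding S_def by (intro compact_continuous_image gc[unfolded S_def]) auto
    then obtain M where M: "M > 0" "\<And>x. x \<in> S \<Longrightarrow> \<bar>Dg (Suc r) x\<bar> \<le> M"
      using compact_imp_bounded[of "Dg (Suc r) ` S"] unfolding bounded_pos by auto
    define \<delta> where "\<delta> = min (lam + 1) (1 - lam) / 2"
    have \<delta>: "\<delta> > 0" using assms by (simp add: \<delta>_def)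
    have \<delta>1: "-1 < lam - \<delta>" "lam + \<delta> < 1" using assms by (auto simp: \<delta>_def min_def field_simps)
    have Tay: "\<exists>\<xi>\<in>S. g x = Dg r lam / fact r * (x - lam) ^ r
                 + Dg (Suc r) \<xi> / fact (Suc r) * (x - lam) ^ Suc r"
      if x: "lam - \<delta> \<le> x" "x \<le> lam + \<delta>" "x \<noteq> lam" for x
    proof -
      have D: "\<forall>m t. m < Suc r \<and> lam - \<delta> \<le> t \<and> t \<le> lam + \<delta> \<longrightarrow>
                 (Dg m has_real_derivative Dg (Suc m) t) (at t)"
      proof (intro allI impI)
        fix m t assume mt: "m < Suc r \<and> lam - \<delta> \<le> t \<and> t \<le> lam + \<delta>"
        have tS: "t \<in> interior S" using mt \<delta>1 unfolding S_def by auto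
        hence "t \<in> S" using interior_subset by blast
        from gd[OF _ this] mt at_within_interior[OF tS]
        show "(Dg m has_real_derivative Dg (Suc m) t) (at t)" by metis
      qed
      obtain t where t: "(if x < lam then x < t \<and> t < lam else lam < t \<and> t < x)"
        and eq: "Dg 0 x = (\<Sum>m<Suc r. (Dg m lam / fact m) * (x - lam)^m)
                    + (Dg (Suc r) t / fact (Suc r)) * (x - lam)^(Suc r)"
        using Taylor[of "Suc r" Dg "Dg 0" "lam - \<delta>" "lam + \<delta>" lam x, OF _ refl D] x \<delta> by auto
      have xS: "x \<in> S" using x \<delta>1 unfolding S_def by auto
      have tS: "t \<in> S" using x t \<delta>1 unfolding S_def by (auto split: if_splits)
      have "(\<Sum>m<r. (Dg m lam / fact m) * (x - lam)^m) = 0"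
        by (intro sum.neutral) (auto simp: hz rhat_lt)
      hence "g x = Dg r lam / fact r * (x - lam) ^ r
                 + Dg (Suc r) t / fact (Suc r) * (x - lam) ^ Suc r"
        using eq g0[OF xS] by simp
      thus ?thesis using tS by blast
    qed
    have rem: "\<bar>Dg (Suc r) \<xi> / fact (Suc r) * y ^ Suc r\<bar> \<le> M * \<bar>y\<bar> ^ Suc r"
      if "\<xi> \<in> S" for \<xi> y
    proof -
      have "\<bar>Dg (Suc r) \<xi> / fact (Suc r)\<bar> \<le> \<bar>Dg (Suc r) \<xi>\<bar>"
      proof -
        have "\<bar>Dg (Suc r) \<xi>\<bar> * 1 \<le> \<bar>Dg (Suc r) \<xi>\<bar> * fact (Suc r)"
          by (rule mult_left_mono[OF fact_ge_1 abs_ge_zero])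
        thus ?thesis by (simp add: abs_div divide_le_eq)
      qed
      also have "\<dots> \<le> M" using M that by simp
      finally have "\<bar>Dg (Suc r) \<xi> / fact (Suc r)\<bar> * \<bar>y\<bar> ^ Suc r \<le> M * \<bar>y\<bar> ^ Suc r"
        by (rule mult_right_mono) simp
      thus ?thesis by (simp only: abs_mult power_abs)
    qed
    define d where "d = min eps \<delta>"
    have d: "d > 0" using eps \<delta> by (simp add: d_def)
    have cneg: "Dg r lam \<le> 0"
    proof (cases "odd r")
      case True thus ?thesis using hz rhat_odd by simp
    next
      case False
      show ?thesis
      proof (rule ccontr)
        assume "\<not> Dg r lam \<le> 0"
        hence cp: "Dg r lam > 0" by simp
        define t where "t = min (d/2) (Dg r lam / (fact r * 2 * M))"
        have t0: "t > 0" using d cp M by (simp add: t_def)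
        have td: "t < d" using d by (simp add: t_def)
        have "lam - t \<noteq> lam" using t0 by simp
        then obtain \<xi> where \<xi>: "\<xi> \<in> S" and geq: "g (lam - t) = Dg r lam / fact r * (- t) ^ r
                 + Dg (Suc r) \<xi> / fact (Suc r) * (- t) ^ Suc r"
          using Tay[of "lam - t"] td t0 unfolding d_def by auto
        have xS: "lam - t \<in> S" using td t0 \<delta>1 unfolding S_def d_def by auto
        have "g (lam - t) \<le> 0"
          using L xS td t0 f0 unfolding d_def S_def by auto
        moreover have ev: "(- t) ^ r = t ^ r" using False by simp
        have geq2: "g (lam - t) = Dg r lam / fact r * t ^ r
                 + Dg (Suc r) \<xi> / fact (Suc r) * (- t) ^ Suc r"
          using geq unfolding ev .
        moreover have "\<bar>Dg (Suc r) \<xi> / fact (Suc r) * (- t) ^ Suc r\<bar> \<le> M * t ^ Suc r"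
          using rem[OF \<xi>, of "-t"] t0 by simp
        ultimately have "Dg r lam / fact r * t ^ r \<le> M * t ^ Suc r"
          using geq2 by (simp only: abs_le_iff) linarith
        hence "Dg r lam / fact r * t ^ r \<le> (M * t) * t ^ r" by (simp add: algebra_simps)
        hence "Dg r lam / fact r \<le> M * t"
          by (rule mult_right_le_imp_le) (simp add: t0)
        moreover have "M * t \<le> Dg r lam / (fact r * 2)"
          using M by (simp add: t_def field_simps min_def)
        ultimately show False using cp by (simp add: field_simps)
      qed
    qed
    define t where "t = min (d/2) (1 / (4 * (M+1)^2))"
    have t0: "t > 0" using d M by (simp add: t_def)
    have td: "t < d" using d by (simp add: t_def)
    have "lam + t \<noteq> lam" using t0 by simp
    then obtain \<xi> where \<xi>: "\<xi> \<in> S" and geq: "g (lam + t) = Dg r lam / fact r * t ^ r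
                 + Dg (Suc r) \<xi> / fact (Suc r) * t ^ Suc r"
      using Tay[of "lam + t"] td t0 unfolding d_def by auto
    have xS: "lam + t \<in> S" using td t0 \<delta>1 unfolding S_def d_def by auto
    have "f (lam + t) \<le> g (lam + t)"
      using R xS td t0 unfolding d_def S_def by auto
    moreover have "f (lam + t) = t ^ r * sqrt t"
      using t0 by (simp add: f_def pw_right powr_add powr_realpow powr_half_sqrt)
    moreover have "\<bar>Dg (Suc r) \<xi> / fact (Suc r) * t ^ Suc r\<bar> \<le> M * t ^ Suc r"
      using rem[OF \<xi>, of t] t0 by simp
    moreover have "Dg r lam / fact r * t ^ r \<le> 0"
      using cneg t0 by (simp add: divide_nonpos_pos mult_nonpos_nonneg)
    ultimately have "t ^ r * sqrt t \<le> M * t ^ Suc r" using geq by (simp only: abs_le_iff) linarith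
    hence "sqrt t * t ^ r \<le> (M * t) * t ^ r" by (simp add: algebra_simps)
    hence st: "sqrt t \<le> M * t"
      by (rule mult_right_le_imp_le) (simp add: t0)
    have ss: "sqrt t * sqrt t = t" using t0 by simp
    have "sqrt t \<le> sqrt (1 / (4 * (M+1)^2))" by (simp add: t_def)
    also have "\<dots> = 1 / (2 * (M+1))" using M by (simp add: real_sqrt_divide real_sqrt_mult)
    finally have s1: "sqrt t \<le> 1 / (2 * (M+1))" .
    have sp: "sqrt t > 0" using t0 by simp
    have e2: "sqrt t * (M * sqrt t) = M * t" by (metis ss mult.assoc mult.commute)
    have "sqrt t * 1 \<le> sqrt t * (M * sqrt t)" unfolding e2 using st by simp
    hence "1 \<le> M * sqrt t" by (rule mult_left_le_imp_le) (rule sp)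
    moreover have "M * sqrt t < 1"
    proof -
      have "M * sqrt t \<le> M * (1 / (2 * (M+1)))" using s1 M(1) by (intro mult_left_mono) auto
      also have "\<dots> < 1" using M by (simp add: field_simps)
      finally show ?thesis .
    qed
    ultimately show False by simp
  qed
  show ?thesis
  proof (intro exI conjI)
    show "deriv_family r {-1..1} f Df" using fam by (simp only: S_def)
    show "\<forall>x\<in>{-1..lam}. f x = 0" by (rule f0)
    show "\<not> (\<exists>g Dg. deriv_family (Suc r) {-1..1} g Dg \<and>
           (\<forall>i::nat. int i \<le> rhat r \<longrightarrow> Dg i lam = Df i lam) \<and>
           (\<exists>eps>0. (\<forall>x\<in>{-1..1}. lam - eps < x \<and> x \<le> lam \<longrightarrow> g x \<le> f x) \<and>
                   (\<forall>x\<in>{-1..1}. lam \<le> x \<and> x < lam + eps \<longrightarrow> g x \<ge> f x)))"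
    proof
      assume "\<exists>g Dg. deriv_family (Suc r) {-1..1} g Dg \<and>
           (\<forall>i::nat. int i \<le> rhat r \<longrightarrow> Dg i lam = Df i lam) \<and>
           (\<exists>eps>0. (\<forall>x\<in>{-1..1}. lam - eps < x \<and> x \<le> lam \<longrightarrow> g x \<le> f x) \<and>
                   (\<forall>x\<in>{-1..1}. lam \<le> x \<and> x < lam + eps \<longrightarrow> g x \<ge> f x))"
      then show False
      proof (elim exE conjE)
        fix g Dg eps
        assume "deriv_family (Suc r) {-1..1} g Dg"
          "\<forall>i::nat. int i \<le> rhat r \<longrightarrow> Dg i lam = Df i lam" "eps > 0"
          "\<forall>x\<in>{-1..1}. lam - eps < x \<and> x \<le> lam \<longrightarrow> g x \<le> f x"
          "\<forall>x\<in>{-1..1}. lam \<le> x \<and> x < lam + eps \<longrightarrow> g x \<ge> f x"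
        then show False using no[of g Dg eps] unfolding S_def by blast
      qed
    qed
  qed
qed

end
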